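(* Let $a$ be an integer, $d\ge1$ an integer and $x\ge6$ real. Then $$0<\rho(a,d)-A\sum_{\substack{1\le t\le x\\ t\equiv a\pmod d}}r(t)<\frac{1.28}{x}.$$
   Context: $A=\prod_p\bigl(1-\frac{1}{p(p-1)}\bigr)$ (product over primes), $r(t)=\frac{1}{t^2}\prod_{p\mid t}\frac{p^2-1}{p^2-p-1}$, and $\rho(a,d)=A\sum_{t\ge1,\ t\equiv a\pmod d}r(t)$ (the average over primes $p$ of the proportion of elements of $\mathbb F_p^*$ with index $[\mathbb F_p^*:\langle x\rangle]\equiv a\pmod d$). *)

theory Defs
  imports "HOL-Analysis.Analysis" "HOL-Number_Theory.Number_Theory"
begin

definition artinA :: real where
  "artinA = (\<Prod>n. if prime n then 1 - 1 / (real n * (real n - 1)) else 1)"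

definition rfun :: "nat \<Rightarrow> real" where
  "rfun t = (1 / (real t)^2) *
     (\<Prod>p\<in>prime_factors t. ((real p)^2 - 1) / ((real p)^2 - real p - 1))"

definition rho :: "int \<Rightarrow> int \<Rightarrow> real" where
  "rho a d = artinA * infsum rfun {t::nat. 1 \<le> t \<and> [int t = a] (mod d)}"

end

theory Submission
  imports Defs
begin


definition uu :: "real \<Rightarrow> real" where
  "uu y = (if y \<le> 1 then 1.65 * y - 1 else if y \<le> 2 then 2 * y / 3 - 1 else 1 / (2 * y - 1))"

definition Psi :: "real \<Rightarrow> real" where
  "Psi y = uu y + uu (y/2) + uu (y/3) / 5 + uu (y/5) / 19 + uu (y/6) / 5 + uu (y/10) / 19
     + uu (y/15) / 95 + uu (y/30) / 95"

definition hh :: "nat \<Rightarrow> real" where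
  "hh p = real p / ((real p)^2 - real p - 1)"

definition ww :: "nat set \<Rightarrow> real" where
  "ww U = (\<Prod>p\<in>U. hh p / real p)"

lemma den_pos: assumes "2 \<le> p" shows "1 \<le> (real p)^2 - real p - 1"
proof -
  have "2 \<le> real p" using assms by simp
  then have "2 * real p \<le> real p * real p" by (intro mult_right_mono) auto
  then show ?thesis unfolding power2_eq_square using \<open>2 \<le> real p\<close> by linarith
qed

lemma hh_nonneg: assumes "2 \<le> p" shows "0 \<le> hh p"
  using den_pos[OF assms] unfolding hh_def by simp

lemma rfun_expand: assumes "1 \<le> t"
  shows "rfun t = (\<Sum>U\<in>Pow (prime_factors t). \<Prod>p\<in>U. hh p) / (real t)^2"
proof -
  have "(\<Prod>p\<in>prime_factors t. ((real p)^2 - 1) / ((real p)^2 - real p - 1))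
        = (\<Prod>p\<in>prime_factors t. hh p + 1)"
  proof (rule prod.cong)
    fix p assume "p \<in> prime_factors t"
    then have "2 \<le> p" by (auto intro: prime_ge_2_nat)
    then have d: "(real p)^2 - real p - 1 \<noteq> 0" using den_pos[of p] by linarith
    show "((real p)^2 - 1) / ((real p)^2 - real p - 1) = hh p + 1"
      unfolding hh_def using d by (simp add: field_simps)
  qed simp
  also have "\<dots> = (\<Sum>U\<in>Pow (prime_factors t). (\<Prod>p\<in>U. hh p) * (\<Prod>p\<in>prime_factors t - U. 1))"
    by (rule prod_add) simp
  also have "\<dots> = (\<Sum>U\<in>Pow (prime_factors t). \<Prod>p\<in>U. hh p)" by simp
  finally show ?thesis unfolding rfun_def by simp
qed

lemma pow_split:
  assumes "finite A" "a \<notin> A"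
  shows "(\<Sum>U\<in>Pow (insert a A). f U) = (\<Sum>U\<in>Pow A. f U + f (insert a U))"
proof -
  have "(\<Sum>U\<in>Pow (insert a A). f U) = (\<Sum>U\<in>Pow A. f U) + (\<Sum>U\<in>insert a ` Pow A. f U)"
    unfolding Pow_insert by (rule sum.union_disjoint) (use assms in auto)
  also have "(\<Sum>U\<in>insert a ` Pow A. f U) = (\<Sum>U\<in>Pow A. f (insert a U))"
  proof (rule sum.reindex_cong[where l = "insert a"])
    show "inj_on (insert a) (Pow A)" using assms unfolding inj_on_def
      by (metis PowD insert_ident subsetD)
  qed auto
  finally show ?thesis by (simp add: sum.distrib)
qed

lemma ww_insert: assumes "finite U" "p \<notin> U"
  shows "ww (insert p U) = hh p / real p * ww U"
  unfolding ww_def using assms by simp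

lemma eight_terms:
  fixes x :: real
  assumes "finite U" "2 \<notin> U" "3 \<notin> U" "5 \<notin> U" "0 < k" "k = real (\<Prod>U)"
  defines "g \<equiv> (\<lambda>V. ww V * uu (x / real (\<Prod>V)))"
  shows "((g U + g (insert 5 U)) + (g (insert 3 U) + g (insert 3 (insert 5 U))))
       + ((g (insert 2 U) + g (insert 2 (insert 5 U))) + (g (insert 2 (insert 3 U)) + g (insert 2 (insert 3 (insert 5 U)))))
       = ww U * Psi (x / k)"
proof -
  have h2: "hh 2 / 2 = 1" by (simp add: hh_def)
  have h3: "hh 3 / 3 = 1/5" by (simp add: hh_def)
  have h5: "hh 5 / 5 = 1/19" by (simp add: hh_def)
  have e: "x / (c * k) = x / k / c" for c :: real by simp
  show ?thesis
    unfolding g_def Psi_def assms(6) using assms(1-4)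
    apply (simp add: ww_insert h2 h3 h5 prod.insert)
    apply (simp add: e algebra_simps)
    done
qed




definition ub :: "real \<Rightarrow> real \<Rightarrow> real" where
  "ub a b = (if b \<le> 1 then 1.65 * b - 1 else if 1 \<le> a \<and> b \<le> 2 then 2 * b / 3 - 1
     else if 2 \<le> a then 1 / (2 * a - 1) else 1)"

lemma uu_le1: "uu z \<le> 1"
  unfolding uu_def by (auto simp: field_simps)

lemma uu_ub: assumes "a < z" "z \<le> b" "0 \<le> a" shows "uu z \<le> ub a b"
proof -
  consider "b \<le> 1" | "\<not> b \<le> 1" "1 \<le> a \<and> b \<le> 2" | "\<not> b \<le> 1" "\<not> (1 \<le> a \<and> b \<le> 2)" "2 \<le> a"
    | "\<not> b \<le> 1" "\<not> (1 \<le> a \<and> b \<le> 2)" "\<not> 2 \<le> a" by blast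
  then show ?thesis
  proof cases
    case 1 then show ?thesis using assms by (simp add: uu_def ub_def)
  next
    case 2 then show ?thesis using assms by (simp add: uu_def ub_def)
  next
    case 3
    then have "uu z = 1 / (2*z - 1)" using assms by (simp add: uu_def)
    also have "\<dots> \<le> 1 / (2*a - 1)" using assms 3 by (intro divide_left_mono) auto
    finally show ?thesis using 3 by (simp add: ub_def)
  next
    case 4
    then have "ub a b = 1" unfolding ub_def by auto
    then show ?thesis using uu_le1[of z] by simp
  qed
qed

lemma Psi_ub: assumes "a < y" "y \<le> b" "0 \<le> a"
  shows "Psi y \<le> ub a b + ub (a/2) (b/2) + ub (a/3) (b/3) / 5 + ub (a/5) (b/5) / 19
     + ub (a/6) (b/6) / 5 + ub (a/10) (b/10) / 19 + ub (a/15) (b/15) / 95 + ub (a/30) (b/30) / 95"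
proof -
  have h: "uu (y/k) \<le> ub (a/k) (b/k)" if "k > 0" for k :: real
    using assms that by (intro uu_ub) (auto simp: divide_strict_right_mono divide_right_mono)
  show ?thesis unfolding Psi_def
    using h[of 2] h[of 3] h[of 5] h[of 6] h[of 10] h[of 15] h[of 30] uu_ub[OF assms]
    by (simp add: divide_right_mono)
qed

lemma Psi_comb:
  assumes "Psi y \<le> B" "0 < y" "y \<le> s^2" "0 \<le> s" "B * s \<le> C" "0 \<le> C"
  shows "Psi y * sqrt y \<le> C"
proof -
  have sq: "sqrt y \<le> s" using assms by (simp add: real_sqrt_le_iff')
  show ?thesis
  proof (cases "Psi y \<le> 0")
    case True
    have "Psi y * sqrt y \<le> 0" using True assms by (intro mult_nonpos_nonneg) auto
    then show ?thesis using assms by linarith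
  next
    case False
    then have "Psi y * sqrt y \<le> B * s" using assms sq by (intro mult_mono) auto
    then show ?thesis using assms by linarith
  qed
qed

lemma Psi_int0: assumes "0 < y" "y \<le> 1" shows "Psi y * sqrt y \<le> 1.35"
proof (rule Psi_comb[where B = "0.1415" and s = "1"])
  show "Psi y \<le> 0.1415"
    by (rule order_trans[OF Psi_ub[of 0 y 1]]) (use assms in \<open>simp_all add: ub_def\<close>)
qed (use assms in \<open>auto simp: power2_eq_square\<close>)

lemma Psi_int1: assumes "1 < y" "y \<le> 2" shows "Psi y * sqrt y \<le> 1.35"
proof (rule Psi_comb[where B = "0.8426" and s = "1.415"])
  show "Psi y \<le> 0.8426"
    by (rule order_trans[OF Psi_ub[of 1 y 2]]) (use assms in \<open>simp_all add: ub_def\<close>)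
qed (use assms in \<open>auto simp: power2_eq_square\<close>)

lemma Psi_int2: assumes "2 < y" "y \<le> 3" shows "Psi y * sqrt y \<le> 1.35"
proof (rule Psi_comb[where B = "0.3854" and s = "1.733"])
  show "Psi y \<le> 0.3854"
    by (rule order_trans[OF Psi_ub[of 2 y 3]]) (use assms in \<open>simp_all add: ub_def\<close>)
qed (use assms in \<open>auto simp: power2_eq_square\<close>)

lemma Psi_int3: assumes "3 < y" "y \<le> 4" shows "Psi y * sqrt y \<le> 1.35"
proof (rule Psi_comb[where B = "0.516" and s = "2"])
  show "Psi y \<le> 0.516"
    by (rule order_trans[OF Psi_ub[of 3 y 4]]) (use assms in \<open>simp_all add: ub_def\<close>)
qed (use assms in \<open>auto simp: power2_eq_square\<close>)

lemma Psi_int4: assumes "4 < y" "y \<le> 5" shows "Psi y * sqrt y \<le> 1.35"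
proof (rule Psi_comb[where B = "0.5861" and s = "2.237"])
  show "Psi y \<le> 0.5861"
    by (rule order_trans[OF Psi_ub[of 4 y 5]]) (use assms in \<open>simp_all add: ub_def\<close>)
qed (use assms in \<open>auto simp: power2_eq_square\<close>)

lemma Psi_int5: assumes "5 < y" "y \<le> 6" shows "Psi y * sqrt y \<le> 1.35"
proof (rule Psi_comb[where B = "0.5361" and s = "2.45"])
  show "Psi y \<le> 0.5361"
    by (rule order_trans[OF Psi_ub[of 5 y 6]]) (use assms in \<open>simp_all add: ub_def\<close>)
qed (use assms in \<open>auto simp: power2_eq_square\<close>)

lemma Psi_int6: assumes "6 < y" "y \<le> 8" shows "Psi y * sqrt y \<le> 1.35"
proof (rule Psi_comb[where B = "0.3486" and s = "2.829"])
  show "Psi y \<le> 0.3486"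
    by (rule order_trans[OF Psi_ub[of 6 y 8]]) (use assms in \<open>simp_all add: ub_def\<close>)
qed (use assms in \<open>auto simp: power2_eq_square\<close>)

lemma Psi_int7: assumes "8 < y" "y \<le> 10" shows "Psi y * sqrt y \<le> 1.35"
proof (rule Psi_comb[where B = "0.326" and s = "3.163"])
  show "Psi y \<le> 0.326"
    by (rule order_trans[OF Psi_ub[of 8 y 10]]) (use assms in \<open>simp_all add: ub_def\<close>)
qed (use assms in \<open>auto simp: power2_eq_square\<close>)

lemma Psi_int8: assumes "10 < y" "y \<le> 12" shows "Psi y * sqrt y \<le> 1.35"
proof (rule Psi_comb[where B = "0.2726" and s = "3.465"])
  show "Psi y \<le> 0.2726"
    by (rule order_trans[OF Psi_ub[of 10 y 12]]) (use assms in \<open>simp_all add: ub_def\<close>)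
qed (use assms in \<open>auto simp: power2_eq_square\<close>)

lemma Psi_int9: assumes "12 < y" "y \<le> 15" shows "Psi y * sqrt y \<le> 1.35"
proof (rule Psi_comb[where B = "0.2485" and s = "3.873"])
  show "Psi y \<le> 0.2485"
    by (rule order_trans[OF Psi_ub[of 12 y 15]]) (use assms in \<open>simp_all add: ub_def\<close>)
qed (use assms in \<open>auto simp: power2_eq_square\<close>)

lemma Psi_int10: assumes "15 < y" "y \<le> 20" shows "Psi y * sqrt y \<le> 1.35"
proof (rule Psi_comb[where B = "0.2061" and s = "4.473"])
  show "Psi y \<le> 0.2061"
    by (rule order_trans[OF Psi_ub[of 15 y 20]]) (use assms in \<open>simp_all add: ub_def\<close>)
qed (use assms in \<open>auto simp: power2_eq_square\<close>)

lemma Psi_int11: assumes "20 < y" "y \<le> 30" shows "Psi y * sqrt y \<le> 1.35"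
proof (rule Psi_comb[where B = "0.1652" and s = "5.478"])
  show "Psi y \<le> 0.1652"
    by (rule order_trans[OF Psi_ub[of 20 y 30]]) (use assms in \<open>simp_all add: ub_def\<close>)
qed (use assms in \<open>auto simp: power2_eq_square\<close>)

lemma Psi_int12: assumes "30 < y" "y \<le> 60" shows "Psi y * sqrt y \<le> 1.35"
proof (rule Psi_comb[where B = "0.1066" and s = "7.746"])
  show "Psi y \<le> 0.1066"
    by (rule order_trans[OF Psi_ub[of 30 y 60]]) (use assms in \<open>simp_all add: ub_def\<close>)
qed (use assms in \<open>auto simp: power2_eq_square\<close>)

lemma Psi_large: assumes "60 < y" shows "Psi y * sqrt y \<le> 1.35"
proof -
  have h: "uu (y/k) \<le> k / y" if "0 < k" "k \<le> 30" for k :: real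
  proof -
    have "2 < y / k" using assms that by (simp add: field_simps)
    then have "uu (y/k) = 1 / (2 * (y/k) - 1)" by (simp add: uu_def)
    also have "\<dots> \<le> 1 / (y/k)" using \<open>2 < y/k\<close> by (intro divide_left_mono mult_pos_pos) auto
    finally show ?thesis using that assms by simp
  qed
  have "Psi y \<le> 1/y + 2/y + (3/y)/5 + (5/y)/19 + (6/y)/5 + (10/y)/19 + (15/y)/95 + (30/y)/95"
    unfolding Psi_def using h[of 1] h[of 2] h[of 3] h[of 5] h[of 6] h[of 10] h[of 15] h[of 30]
    by (simp add: divide_right_mono)
  also have "\<dots> = (576/95) / y" by (simp add: field_simps)
  finally have P: "Psi y \<le> (576/95) / y" .
  have s: "7.7 \<le> sqrt y"
    using assms by (intro real_le_rsqrt) (simp add: power2_eq_square)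
  have yy: "sqrt y * sqrt y = y" using assms by (simp add: abs_of_pos)
  have "Psi y * sqrt y \<le> ((576/95) / y) * sqrt y"
    using P assms by (intro mult_right_mono) auto
  also have "\<dots> = (576/95) / sqrt y"
  proof -
    define z where "z = sqrt y"
    have z: "0 < z" "y = z * z" unfolding z_def using assms yy by auto
    show ?thesis unfolding z_def[symmetric] by (subst z(2)) (use z in \<open>simp add: field_simps\<close>)
  qed
  also have "\<dots> \<le> (576/95) / 7.7" using s assms by (intro divide_left_mono) auto
  also have "\<dots> \<le> 1.35" by simp
  finally show ?thesis .
qed

lemma Psi_bound: assumes "0 < y" shows "Psi y * sqrt y \<le> 1.35"
proof -
  consider "0 < y \<and> y \<le> 1" | "1 < y \<and> y \<le> 2" | "2 < y \<and> y \<le> 3" | "3 < y \<and> y \<le> 4" | "4 < y \<and> y \<le> 5" | "5 < y \<and> y \<le> 6" | "6 < y \<and> y \<le> 8" | "8 < y \<and> y \<le> 10" | "10 < y \<and> y \<le> 12" | "12 < y \<and> y \<le> 15" | "15 < y \<and> y \<le> 20" | "20 < y \<and> y \<le> 30" | "30 < y \<and> y \<le> 60" | "60 < y" using assms by linarith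
  then show ?thesis
  proof cases
    case 1 then show ?thesis using Psi_int0 by auto
  next
    case 2 then show ?thesis using Psi_int1 by auto
  next
    case 3 then show ?thesis using Psi_int2 by auto
  next
    case 4 then show ?thesis using Psi_int3 by auto
  next
    case 5 then show ?thesis using Psi_int4 by auto
  next
    case 6 then show ?thesis using Psi_int5 by auto
  next
    case 7 then show ?thesis using Psi_int6 by auto
  next
    case 8 then show ?thesis using Psi_int7 by auto
  next
    case 9 then show ?thesis using Psi_int8 by auto
  next
    case 10 then show ?thesis using Psi_int9 by auto
  next
    case 11 then show ?thesis using Psi_int10 by auto
  next
    case 12 then show ?thesis using Psi_int11 by auto
  next
    case 13 then show ?thesis using Psi_int12 by auto
  next
    case 14 then show ?thesis using Psi_large by auto
  qed
qed




lemma sq_tele_step: assumes "1 \<le> m" shows "1 / (real m)^2 \<le> 1 / (real m - 1/2) - 1 / (real m + 1/2)"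
proof -
  have m: "1 \<le> real m" using assms by simp
  have "1 / (real m - 1/2) - 1 / (real m + 1/2) = 1 / ((real m)^2 - 1/4)"
    using m by (simp add: field_simps power2_eq_square)
  have mm: "1 \<le> (real m)^2" using m by (simp add: one_le_power)
  have a1: "0 < (real m)^2 - 1/4" using mm by linarith
  have a2: "0 < (real m)^2" using mm by linarith
  have "0 < (real m)^2 * ((real m)^2 - 1/4)" using a2 a1 by (rule mult_pos_pos)
  then have "1 / (real m)^2 \<le> 1 / ((real m)^2 - 1/4)"
    by (intro divide_left_mono) auto
  also note \<open>1 / (real m - 1/2) - 1 / (real m + 1/2) = 1 / ((real m)^2 - 1/4)\<close>[symmetric]
  finally show ?thesis using assms by simp
qed

lemma sq_tele: assumes "1 \<le> j"
  shows "(\<Sum>m\<in>{j..<j+i}. 1/(real m)^2) \<le> 1/(real j - 1/2) - 1/(real (j+i) - 1/2)"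
proof (induction i)
  case 0 then show ?case by simp
next
  case (Suc i)
  have "(\<Sum>m\<in>{j..<j+Suc i}. 1/(real m)^2) = (\<Sum>m\<in>{j..<j+i}. 1/(real m)^2) + 1/(real (j+i))^2"
    by simp
  also have "\<dots> \<le> 1/(real j - 1/2) - 1/(real (j+i) - 1/2) + (1 / (real (j+i) - 1/2) - 1 / (real (j+i) + 1/2))"
    using Suc sq_tele_step[of "j+i"] assms by linarith
  also have "\<dots> = 1/(real j - 1/2) - 1/(real (j+Suc i) - 1/2)" by simp
  finally show ?case .
qed

lemma sum_sq_ge: assumes "finite F" "\<And>m. m \<in> F \<Longrightarrow> j \<le> m" "1 \<le> j"
  shows "(\<Sum>m\<in>F. 1/(real m)^2) \<le> 1/(real j - 1/2)"
proof -
  obtain i where i: "F \<subseteq> {j..<j+i}"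
  proof
    show "F \<subseteq> {j..<j + (Max (insert j F) + 1)}"
    proof
      fix x assume x: "x \<in> F"
      have "x \<le> Max (insert j F)" using assms x by (intro Max_ge) auto
      then show "x \<in> {j..<j + (Max (insert j F) + 1)}" unfolding atLeastLessThan_iff
        using assms(2)[OF x] by linarith
    qed
  qed
  have "(\<Sum>m\<in>F. 1/(real m)^2) \<le> (\<Sum>m\<in>{j..<j+i}. 1/(real m)^2)"
    by (rule sum_mono2) (use i in auto)
  also have "\<dots> \<le> 1/(real j - 1/2) - 1/(real (j+i) - 1/2)" by (rule sq_tele[OF assms(3)])
  also have "\<dots> \<le> 1/(real j - 1/2)" using assms(3) by simp
  finally show ?thesis .
qed

lemma sum_sq_all: assumes "finite F" "\<And>m. m \<in> F \<Longrightarrow> 1 \<le> m"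
  shows "(\<Sum>m\<in>F. 1/(real m)^2) \<le> 1.65"
proof -
  let ?G = "F \<union> {1,2}"
  have "(\<Sum>m\<in>F. 1/(real m)^2) \<le> (\<Sum>m\<in>?G. 1/(real m)^2)"
    by (rule sum_mono2) (use assms in auto)
  also have "\<dots> = (\<Sum>m\<in>?G - {1,2}. 1/(real m)^2) + (\<Sum>m\<in>{1,2}. 1/(real m)^2)"
    by (rule sum.subset_diff) (use assms in auto)
  also have "(\<Sum>m\<in>?G - {1,2}. 1/(real m)^2) \<le> 1/(real 3 - 1/2)"
  proof (rule sum_sq_ge)
    fix m assume "m \<in> ?G - {1,2}"
    then show "3 \<le> m" using assms(2)[of m] by auto
  qed (use assms in auto)
  finally show ?thesis by (simp add: power2_eq_square)
qed

lemma V_bound: assumes "0 < y" "finite F" "\<And>m. m \<in> F \<Longrightarrow> 1 \<le> m \<and> y \<le> real m"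
  shows "y * (\<Sum>m\<in>F. 1/(real m)^2) \<le> 1 + uu y"
proof -
  consider "y \<le> 1" | "1 < y" "y \<le> 2" | "2 < y" by linarith
  then show ?thesis
  proof cases
    case 1
    have "y * (\<Sum>m\<in>F. 1/(real m)^2) \<le> y * 1.65"
      using sum_sq_all[OF assms(2)] assms by (intro mult_left_mono) auto
    then show ?thesis using 1 by (simp add: uu_def)
  next
    case 2
    have "(\<Sum>m\<in>F. 1/(real m)^2) \<le> 1 / (real 2 - 1/2)"
    proof (rule sum_sq_ge[OF assms(2)])
      fix m assume "m \<in> F"
      then have "1 < real m" using assms(3)[of m] 2 by auto
      then show "2 \<le> m" by linarith
    qed auto
    then have "y * (\<Sum>m\<in>F. 1/(real m)^2) \<le> y * (2/3)"
      using assms by (intro mult_left_mono) auto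
    then show ?thesis using 2 by (simp add: uu_def)
  next
    case 3
    define j where "j = nat \<lceil>y\<rceil>"
    have jy: "y \<le> real j" unfolding j_def using 3
      by (metis le_of_int_ceiling of_nat_nat order_trans ceiling_le_zero le_cases of_int_le_iff less_le_not_le order_less_trans zero_less_numeral)
    have "(\<Sum>m\<in>F. 1/(real m)^2) \<le> 1 / (real j - 1/2)"
    proof (rule sum_sq_ge[OF assms(2)])
      fix m assume "m \<in> F"
      then have "y \<le> real m" using assms(3) by auto
      then have "\<lceil>y\<rceil> \<le> int m" by (simp add: ceiling_le_iff)
      then show "j \<le> m" unfolding j_def by linarith
    next
      show "1 \<le> j" using jy 3 by linarith
    qed
    also have "\<dots> \<le> 1 / (y - 1/2)" using jy 3 by (intro divide_left_mono) auto
    finally have "y * (\<Sum>m\<in>F. 1/(real m)^2) \<le> y * (1 / (y - 1/2))"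
      using assms by (intro mult_left_mono) auto
    also have "\<dots> = 1 + 1 / (2*y - 1)" using 3 by (simp add: field_simps)
    finally show ?thesis using 3 by (simp add: uu_def)
  qed
qed

lemma prod_primes_dvd: assumes "finite U" "\<And>p. p \<in> U \<Longrightarrow> prime p \<and> p dvd t"
  shows "(\<Prod>U) dvd (t::nat)"
  using assms
proof (induction U rule: finite_induct)
  case empty then show ?case by simp
next
  case (insert p U)
  have cop: "coprime p (\<Prod>U)"
    by (rule prod_coprime_right) (use insert in \<open>auto intro: primes_coprime\<close>)
  have "p * \<Prod>U dvd t" by (rule divides_mult) (use insert cop in auto)
  then show ?case using insert by simp
qed

lemma inner_bound:
  assumes "finite U" "\<And>p. p \<in> U \<Longrightarrow> prime p" "1 \<le> n"
  shows "real n * (\<Sum>t\<in>{t\<in>{n..M}. U \<subseteq> prime_factors t}. 1/(real t)^2)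
           \<le> (1 + uu (real n / real (\<Prod>U))) / real (\<Prod>U)"
proof -
  define k where "k = \<Prod>U"
  have kpos: "0 < k" unfolding k_def using assms by (auto intro!: prod_pos prime_gt_0_nat)
  define F where "F = {m. m \<in> {1..M} \<and> n \<le> k * m}"
  have sub: "{t\<in>{n..M}. U \<subseteq> prime_factors t} \<subseteq> (\<lambda>m. k * m) ` F"
  proof
    fix t assume t: "t \<in> {t\<in>{n..M}. U \<subseteq> prime_factors t}"
    then have tpos: "0 < t" using assms by auto
    have "k dvd t" unfolding k_def
      by (rule prod_primes_dvd) (use t assms in \<open>auto simp: in_prime_factors_iff\<close>)
    then obtain m where m: "t = k * m" by blast
    have "m \<in> F"
    proof -
      have "m \<le> t" using m tpos by (metis dvd_imp_le dvd_triv_right)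
      moreover have "m \<noteq> 0" using m tpos by auto
      moreover have "m \<le> M" using \<open>m \<le> t\<close> t by auto
      ultimately show ?thesis unfolding F_def using t m by auto
    qed
    then show "t \<in> (\<lambda>m. k * m) ` F" using m by auto
  qed
  have finF: "finite F" unfolding F_def by auto
  have "(\<Sum>t\<in>{t\<in>{n..M}. U \<subseteq> prime_factors t}. 1/(real t)^2) \<le> (\<Sum>t\<in>(\<lambda>m. k * m) ` F. 1/(real t)^2)"
    by (rule sum_mono2) (use sub finF in auto)
  also have "\<dots> = (\<Sum>m\<in>F. 1/(real (k*m))^2)"
    using kpos by (simp add: sum.reindex inj_on_def)
  also have "\<dots> = (1/(real k)^2) * (\<Sum>m\<in>F. 1/(real m)^2)"
    by (simp add: sum_distrib_left power_mult_distrib)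
  finally have A: "(\<Sum>t\<in>{t\<in>{n..M}. U \<subseteq> prime_factors t}. 1/(real t)^2) \<le> (1/(real k)^2) * (\<Sum>m\<in>F. 1/(real m)^2)" .
  have V: "(real n / real k) * (\<Sum>m\<in>F. 1/(real m)^2) \<le> 1 + uu (real n / real k)"
  proof (rule V_bound[OF _ finF])
    show "0 < real n / real k" using kpos assms by auto
    fix m assume "m \<in> F"
    then have "1 \<le> m" "n \<le> k * m" unfolding F_def by auto
    then have "real n \<le> real k * real m" by (metis of_nat_le_iff of_nat_mult)
    then show "1 \<le> m \<and> real n / real k \<le> real m" using \<open>1 \<le> m\<close> kpos by (simp add: field_simps)
  qed
  have "real n * (\<Sum>t\<in>{t\<in>{n..M}. U \<subseteq> prime_factors t}. 1/(real t)^2) \<le> real n * ((1/(real k)^2) * (\<Sum>m\<in>F. 1/(real m)^2))"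
    using A by (intro mult_left_mono) auto
  also have "\<dots> = ((real n / real k) * (\<Sum>m\<in>F. 1/(real m)^2)) / real k"
    by (simp add: power2_eq_square)
  also have "\<dots> \<le> (1 + uu (real n / real k)) / real k"
    using V kpos by (intro divide_right_mono) auto
  finally show ?thesis unfolding k_def .
qed




definition fA :: "nat \<Rightarrow> real" where
  "fA n = (if prime n then 1 - 1 / (real n * (real n - 1)) else 1)"

definition PM :: "nat \<Rightarrow> nat set" where
  "PM M = {p\<in>{..M}. prime p}"

definition fq :: "nat \<Rightarrow> real" where
  "fq m = (sqrt (real m) - 1) / ((real m)^2 - real m)"

lemma fA_bounds: "0 < fA n \<and> fA n \<le> 1"
proof (cases "prime n")
  case True
  then have "2 \<le> real n" using prime_ge_2_nat by (metis of_nat_le_iff of_nat_numeral)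
  then have "1 \<le> real n - 1" by simp
  then have "2 * 1 \<le> real n * (real n - 1)" using \<open>2 \<le> real n\<close> by (intro mult_mono) auto
  then have "2 \<le> real n * (real n - 1)" by simp
  then have "1 / (real n * (real n - 1)) \<le> 1/2" by (simp add: field_simps)
  moreover have "0 < 1 / (real n * (real n - 1))" using \<open>2 \<le> real n * (real n - 1)\<close> by simp
  ultimately show ?thesis using True unfolding fA_def by auto
qed (simp add: fA_def)

lemma artinA_eq: "artinA = prodinf fA"
  unfolding artinA_def fA_def by simp

lemma fA_conv: "convergent_prod fA"
proof -
  have "summable (\<lambda>n. norm (fA n - 1))"
  proof (rule summable_comparison_test')
    show "summable (\<lambda>n. 2 * inverse (real n ^ 2))"
      by (intro summable_mult inverse_power_summable) auto
    fix n :: nat assume "2 \<le> n"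
    show "norm (norm (fA n - 1)) \<le> 2 * inverse (real n ^ 2)"
    proof (cases "prime n")
      case True
      have n2: "2 \<le> real n" using \<open>2 \<le> n\<close> by simp
      have pos: "0 < real n * (real n - 1)" using n2 by simp
      have "norm (norm (fA n - 1)) = 1 / (real n * (real n - 1))"
        using True pos unfolding fA_def by simp
      also have "\<dots> \<le> 2 / (real n)^2"
        using n2 pos by (simp add: field_simps power2_eq_square)
      finally show ?thesis by (simp add: field_simps)
    qed (simp add: fA_def)
  qed
  then show ?thesis
    by (intro abs_convergent_prod_imp_convergent_prod summable_imp_abs_convergent_prod)
qed

lemma artinA_pos: "0 < artinA"
proof -
  have ne: "artinA \<noteq> 0" unfolding artinA_eq
    by (rule prodinf_nonzero[OF fA_conv]) (use fA_bounds in \<open>auto simp: less_le\<close>)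
  have lim: "(\<lambda>n. \<Prod>i\<le>n. fA i) \<longlonglongrightarrow> artinA"
    unfolding artinA_eq by (rule convergent_prod_LIMSEQ[OF fA_conv])
  have nn: "\<forall>n. 0 \<le> (\<Prod>i\<le>n. fA i)" by (intro allI prod_nonneg) (use fA_bounds less_imp_le in blast)
  have "0 \<le> artinA"
    by (rule LIMSEQ_le_const[OF lim]) (use nn in auto)
  then show ?thesis using ne by simp
qed

lemma artinA_le: "artinA \<le> (\<Prod>p\<in>PM M. 1 - 1 / (real p * (real p - 1)))"
proof -
  have lim: "(\<lambda>n. \<Prod>i\<le>n. fA i) \<longlonglongrightarrow> artinA"
    unfolding artinA_eq by (rule convergent_prod_LIMSEQ[OF fA_conv])
  have dec: "decseq (\<lambda>n. \<Prod>i\<le>n. fA i)"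
  proof (rule decseq_SucI)
    fix n
    have "(\<Prod>i\<le>Suc n. fA i) = (\<Prod>i\<le>n. fA i) * fA (Suc n)" by simp
    also have "\<dots> \<le> (\<Prod>i\<le>n. fA i) * 1"
    proof -
      have pp: "0 \<le> (\<Prod>i\<le>n. fA i)" by (rule prod_nonneg) (use fA_bounds less_imp_le in blast)
      show ?thesis using pp fA_bounds[of "Suc n"] by (intro mult_left_mono) auto
    qed
    finally show "(\<Prod>i\<le>Suc n. fA i) \<le> (\<Prod>i\<le>n. fA i)" by simp
  qed
  have "artinA \<le> (\<Prod>i\<le>M. fA i)" by (rule decseq_ge[OF dec lim])
  also have "(\<Prod>i\<le>M. fA i) = (\<Prod>p\<in>PM M. 1 - 1 / (real p * (real p - 1)))"
    unfolding PM_def fA_def by (subst prod.inter_filter) auto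
  finally show ?thesis .
qed

lemma factor_one: assumes "2 \<le> p"
  shows "(1 - 1 / (real p * (real p - 1))) * (1 + hh p / real p) = 1"
proof -
  define D where "D = (real p)^2 - real p - 1"
  have D: "1 \<le> D" unfolding D_def using den_pos[OF assms] .
  have p: "real p \<noteq> 0" using assms by auto
  have e1: "hh p / real p = 1 / D" unfolding hh_def D_def[symmetric] using p by simp
  have e2: "real p * (real p - 1) = D + 1" unfolding D_def by (simp add: power2_eq_square algebra_simps)
  have D0: "D \<noteq> 0" "D + 1 \<noteq> 0" using D by auto
  have a: "1 - 1 / (D + 1) = D / (D + 1)" using D0 by (simp add: field_simps)
  have b: "1 + 1 / D = (D + 1) / D" using D0 by (simp add: field_simps)
  show ?thesis unfolding e1 e2 a b using D0 by simp
qed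

lemma factor_sqrt: assumes "2 \<le> p"
  shows "(1 - 1 / (real p * (real p - 1))) * (1 + hh p / real p * sqrt (real p)) = 1 + fq p"
proof -
  define D where "D = (real p)^2 - real p - 1"
  define r where "r = sqrt (real p)"
  have D: "1 \<le> D" unfolding D_def using den_pos[OF assms] .
  have p: "real p \<noteq> 0" using assms by auto
  have e1: "1 + hh p / real p * r = 1 + r / D" unfolding hh_def D_def[symmetric] using p by simp
  have e2: "real p * (real p - 1) = D + 1" unfolding D_def by (simp add: power2_eq_square algebra_simps)
  have e3: "fq p = (r - 1) / (D + 1)" unfolding fq_def D_def r_def by (simp add: algebra_simps)
  have D0: "D \<noteq> 0" "D + 1 \<noteq> 0" using D by auto
  have a: "1 - 1 / (D + 1) = D / (D + 1)" using D0 by (simp add: field_simps)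
  have b: "1 + r / D = (D + r) / D" using D0 by (simp add: field_simps)
  have c: "D / (D + 1) * ((D + r) / D) = (D + r) / (D + 1)" using D0 by simp
  have d: "(D + r) / (D + 1) = 1 + (r - 1) / (D + 1)" using D0 by (simp add: field_simps)
  have "(1 - 1 / (real p * (real p - 1))) * (1 + hh p / real p * r) = 1 + fq p"
    unfolding e1 e2 e3 a b c d ..
  then show ?thesis unfolding r_def .
qed

lemma prod_le_exp: fixes f :: "'a \<Rightarrow> real" assumes "finite A" "\<And>x. x \<in> A \<Longrightarrow> 0 \<le> f x"
  shows "(\<Prod>x\<in>A. 1 + f x) \<le> exp (\<Sum>x\<in>A. f x)"
  using assms
proof (induction A rule: finite_induct)
  case empty then show ?case by simp
next
  case (insert a A)
  have "(\<Prod>x\<in>insert a A. 1 + f x) = (1 + f a) * (\<Prod>x\<in>A. 1 + f x)" using insert by simp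
  also have "\<dots> \<le> exp (f a) * exp (\<Sum>x\<in>A. f x)"
    using insert by (intro mult_mono prod_nonneg) (auto simp: exp_ge_add_one_self add_nonneg_nonneg)
  also have "\<dots> = exp (\<Sum>x\<in>insert a A. f x)" using insert by (simp add: exp_add)
  finally show ?case .
qed

lemma fq_nonneg: assumes "1 \<le> m" shows "0 \<le> fq m"
proof -
  have m1: "1 \<le> real m" using assms by simp
  have "1 \<le> sqrt (real m)" using real_sqrt_le_mono[OF m1] by simp
  moreover have "0 \<le> (real m)^2 - real m" using assms by (simp add: power2_eq_square)
  ultimately show ?thesis unfolding fq_def by simp
qed

lemma fq_tele: assumes "3 \<le> m"
  shows "fq m \<le> 1 / sqrt (real m - 2) - 1 / sqrt (real m)"
proof -
  define s where "s = sqrt (real m)"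
  define r where "r = sqrt (real m - 2)"
  have r1: "1 \<le> r" unfolding r_def using assms by simp
  have rs: "r \<le> s" unfolding r_def s_def by simp
  have s2: "s^2 = real m" unfolding s_def by simp
  have s0: "0 \<le> s" unfolding s_def by simp
  have r2: "r^2 = real m - 2" unfolding r_def using assms by simp
  have s1: "1 < s" unfolding s_def using assms by simp
  have "fq m = (s - 1) / (s^2 * (s^2 - 1))" unfolding fq_def s2[symmetric] s_def[symmetric]
    using s0 by (simp add: power2_eq_square algebra_simps)
  also have "\<dots> = 1 / (s^2 * (s + 1))"
  proof -
    have f: "s^2 * (s^2 - 1) = (s - 1) * (s^2 * (s + 1))" by (simp add: power2_eq_square algebra_simps)
    have "s - 1 \<noteq> 0" using s1 by simp
    then have "(s - 1) / ((s - 1) * (s^2 * (s + 1))) = 1 / (s^2 * (s + 1))" by simp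
    then show ?thesis by (simp only: f)
  qed
  also have "\<dots> \<le> 2 / (r * s * (s + r))"
  proof -
    have "r * s * (s + r) \<le> s * s * (s + s)"
      using r1 rs s1 by (intro mult_mono add_mono) auto
    also have "s * s * (s + s) = 2 * (s^2 * (s + 1)) - 2 * s^2" by (simp add: power2_eq_square algebra_simps)
    also have "\<dots> \<le> 2 * (s^2 * (s + 1))" by simp
    finally have "r * s * (s + r) \<le> 2 * (s^2 * (s + 1))" .
    moreover have "0 < r * s * (s + r)" using r1 s1 by simp
    ultimately show ?thesis by (simp add: field_simps)
  qed
  also have "\<dots> = 1 / r - 1 / s"
  proof -
    have "s^2 - r^2 = 2" using s2 r2 by simp
    then have eq: "(s - r) * (s + r) = 2" by (simp add: power2_eq_square algebra_simps)
    have "(s - r) * (r * s * (s + r)) = ((s - r) * (s + r)) * (r * s)" by (simp add: algebra_simps)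
    also have "\<dots> = 2 * (r * s)" using eq by simp
    finally have m: "(s - r) * (r * s * (s + r)) = 2 * (r * s)" .
    have nz: "r * s \<noteq> 0" "r * s * (s + r) \<noteq> 0" using r1 s1 by auto
    have "1 / r - 1 / s = (s - r) / (r * s)" using r1 s1 by (simp add: field_simps)
    also have "\<dots> = 2 / (r * s * (s + r))" using m nz by (simp add: frac_eq_eq)
    finally show ?thesis by (rule sym)
  qed
  finally show ?thesis unfolding r_def s_def .
qed

lemma odd_tele: "(\<Sum>i\<in>{24..<24+K}. fq (2*i+1)) \<le> 1 / sqrt 47 - 1 / sqrt (real (2*(24+K)) - 1)"
proof (induction K)
  case 0 then show ?case by simp
next
  case (Suc K)
  have "fq (2*(24+K)+1) \<le> 1 / sqrt (real (2*(24+K)+1) - 2) - 1 / sqrt (real (2*(24+K)+1))"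
    by (rule fq_tele) simp
  moreover have "real (2*(24+K)+1) - 2 = real (2*(24+K)) - 1" by simp
  moreover have "real (2*(24+K)+1) = real (2*(24+Suc K)) - 1" by simp
  moreover have "(\<Sum>i\<in>{24..<Suc (24+K)}. fq (2*i+1)) = (\<Sum>i\<in>{24..<24+K}. fq (2*i+1)) + fq (2*(24+K)+1)"
    by (rule sum.atLeastLessThan_Suc; simp)
  ultimately show ?case using Suc by (simp only: add_Suc_right; linarith)
qed

lemma odd_tail: assumes "finite T" "\<And>m. m \<in> T \<Longrightarrow> 47 < m \<and> odd m"
  shows "(\<Sum>m\<in>T. fq m) \<le> 0.1459"
proof -
  define K where "K = Max (insert 0 T)"
  have sub: "T \<subseteq> (\<lambda>i. 2*i+1) ` {24..<24+K}"
  proof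
    fix m assume m: "m \<in> T"
    then obtain i where i: "m = 2*i+1" using assms(2) oddE by blast
    have "m \<le> K" unfolding K_def using assms(1) m by (intro Max_ge) auto
    then have "i \<in> {24..<24+K}" using assms(2)[OF m] i by auto
    then show "m \<in> (\<lambda>i. 2*i+1) ` {24..<24+K}" using i by auto
  qed
  have "(\<Sum>m\<in>T. fq m) \<le> (\<Sum>m\<in>(\<lambda>i. 2*i+1) ` {24..<24+K}. fq m)"
    by (rule sum_mono2) (use sub in \<open>auto intro: fq_nonneg\<close>)
  also have "\<dots> = (\<Sum>i\<in>{24..<24+K}. fq (2*i+1))"
    by (simp add: sum.reindex inj_on_def)
  also have "\<dots> \<le> 1 / sqrt 47 - 1 / sqrt (real (2*(24+K)) - 1)" by (rule odd_tele)
  also have "\<dots> \<le> 1 / sqrt 47" by simp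
  also have "\<dots> \<le> 0.1459"
  proof -
    have "6.8541 \<le> sqrt 47" by (rule real_le_rsqrt) (simp add: power2_eq_square)
    then show ?thesis by (simp add: field_simps)
  qed
  finally show ?thesis .
qed

lemma E12_sum: "(\<Sum>p\<in>{7,11,13,17,19,23,29,31,37,41,43,47::nat}. fq p) \<le> 0.129"
proof -
  have s7: "sqrt (real (7::nat)) \<le> 2.6459" by (subst real_sqrt_le_iff') (simp_all add: power2_eq_square)
  have f7: "fq 7 \<le> 0.039189" unfolding fq_def using s7 by (simp add: divide_right_mono)
  have s11: "sqrt (real (11::nat)) \<le> 3.3168" by (subst real_sqrt_le_iff') (simp_all add: power2_eq_square)
  have f11: "fq 11 \<le> 0.021062" unfolding fq_def using s11 by (simp add: divide_right_mono)
  have s13: "sqrt (real (13::nat)) \<le> 3.6057" by (subst real_sqrt_le_iff') (simp_all add: power2_eq_square)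
  have f13: "fq 13 \<le> 0.016704" unfolding fq_def using s13 by (simp add: divide_right_mono)
  have s17: "sqrt (real (17::nat)) \<le> 4.1233" by (subst real_sqrt_le_iff') (simp_all add: power2_eq_square)
  have f17: "fq 17 \<le> 0.011483" unfolding fq_def using s17 by (simp add: divide_right_mono)
  have s19: "sqrt (real (19::nat)) \<le> 4.3590" by (subst real_sqrt_le_iff') (simp_all add: power2_eq_square)
  have f19: "fq 19 \<le> 0.009822" unfolding fq_def using s19 by (simp add: divide_right_mono)
  have s23: "sqrt (real (23::nat)) \<le> 4.7960" by (subst real_sqrt_le_iff') (simp_all add: power2_eq_square)
  have f23: "fq 23 \<le> 0.007502" unfolding fq_def using s23 by (simp add: divide_right_mono)
  have s29: "sqrt (real (29::nat)) \<le> 5.3853" by (subst real_sqrt_le_iff') (simp_all add: power2_eq_square)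
  have f29: "fq 29 \<le> 0.005401" unfolding fq_def using s29 by (simp add: divide_right_mono)
  have s31: "sqrt (real (31::nat)) \<le> 5.5679" by (subst real_sqrt_le_iff') (simp_all add: power2_eq_square)
  have f31: "fq 31 \<le> 0.004912" unfolding fq_def using s31 by (simp add: divide_right_mono)
  have s37: "sqrt (real (37::nat)) \<le> 6.0829" by (subst real_sqrt_le_iff') (simp_all add: power2_eq_square)
  have f37: "fq 37 \<le> 0.003816" unfolding fq_def using s37 by (simp add: divide_right_mono)
  have s41: "sqrt (real (41::nat)) \<le> 6.4033" by (subst real_sqrt_le_iff') (simp_all add: power2_eq_square)
  have f41: "fq 41 \<le> 0.003295" unfolding fq_def using s41 by (simp add: divide_right_mono)
  have s43: "sqrt (real (43::nat)) \<le> 6.5576" by (subst real_sqrt_le_iff') (simp_all add: power2_eq_square)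
  have f43: "fq 43 \<le> 0.003078" unfolding fq_def using s43 by (simp add: divide_right_mono)
  have s47: "sqrt (real (47::nat)) \<le> 6.8558" by (subst real_sqrt_le_iff') (simp_all add: power2_eq_square)
  have f47: "fq 47 \<le> 0.002709" unfolding fq_def using s47 by (simp add: divide_right_mono)
  show ?thesis using f7 f11 f13 f17 f19 f23 f29 f31 f37 f41 f43 f47 by simp
qed








lemma PM_finite: "finite (PM M)" unfolding PM_def by auto

lemma ww_alt: "ww U = (\<Prod>p\<in>U. hh p) / real (\<Prod>U)"
  unfolding ww_def by (simp add: prod_dividef)

lemma ww_nonneg: assumes "U \<subseteq> PM M" shows "0 \<le> ww U"
  unfolding ww_def using assms
  by (intro prod_nonneg divide_nonneg_nonneg hh_nonneg) (auto simp: PM_def prime_ge_2_nat)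

lemma pf_sub_PM: assumes "1 \<le> t" "t \<le> M" shows "prime_factors t \<subseteq> PM M"
proof
  fix p assume "p \<in> prime_factors t"
  then have "prime p" "p dvd t" by (auto simp: in_prime_factors_iff)
  then have "p \<le> t" using assms by (intro dvd_imp_le) auto
  then show "p \<in> PM M" using \<open>prime p\<close> assms unfolding PM_def by auto
qed

lemma main_sum: assumes "1 \<le> n"
  shows "real n * (\<Sum>t\<in>{n..M}. rfun t) \<le> (\<Sum>U\<in>Pow (PM M). ww U * (1 + uu (real n / real (\<Prod>U))))"
proof -
  have "(\<Sum>t\<in>{n..M}. rfun t) = (\<Sum>t\<in>{n..M}. \<Sum>U\<in>{U. U \<in> Pow (PM M) \<and> U \<subseteq> prime_factors t}. (\<Prod>p\<in>U. hh p) / (real t)^2)"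
  proof (rule sum.cong)
    fix t assume t: "t \<in> {n..M}"
    then have "Pow (prime_factors t) = {U. U \<in> Pow (PM M) \<and> U \<subseteq> prime_factors t}"
      using pf_sub_PM[of t M] assms by auto
    then show "rfun t = (\<Sum>U\<in>{U. U \<in> Pow (PM M) \<and> U \<subseteq> prime_factors t}. (\<Prod>p\<in>U. hh p) / (real t)^2)"
      using rfun_expand[of t] t assms by (simp add: sum_divide_distrib)
  qed simp
  also have "\<dots> = (\<Sum>U\<in>Pow (PM M). \<Sum>t\<in>{t. t \<in> {n..M} \<and> U \<subseteq> prime_factors t}. (\<Prod>p\<in>U. hh p) / (real t)^2)"
    by (rule sum.swap_restrict) (auto simp: PM_finite)
  also have "\<dots> = (\<Sum>U\<in>Pow (PM M). (\<Prod>p\<in>U. hh p) * (\<Sum>t\<in>{t\<in>{n..M}. U \<subseteq> prime_factors t}. 1 / (real t)^2))"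
    by (simp add: sum_distrib_left)
  finally have eq: "real n * (\<Sum>t\<in>{n..M}. rfun t) = (\<Sum>U\<in>Pow (PM M). (\<Prod>p\<in>U. hh p) * (real n * (\<Sum>t\<in>{t\<in>{n..M}. U \<subseteq> prime_factors t}. 1 / (real t)^2)))"
    by (simp add: sum_distrib_left algebra_simps)
  also have "\<dots> \<le> (\<Sum>U\<in>Pow (PM M). (\<Prod>p\<in>U. hh p) * ((1 + uu (real n / real (\<Prod>U))) / real (\<Prod>U)))"
  proof (rule sum_mono)
    fix U assume U: "U \<in> Pow (PM M)"
    then have fin: "finite U" using PM_finite finite_subset by auto
    have pr: "\<And>p. p \<in> U \<Longrightarrow> prime p" using U unfolding PM_def by auto
    have "0 \<le> (\<Prod>p\<in>U. hh p)" using pr by (intro prod_nonneg hh_nonneg) (auto intro: prime_ge_2_nat)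
    then show "(\<Prod>p\<in>U. hh p) * (real n * (\<Sum>t\<in>{t\<in>{n..M}. U \<subseteq> prime_factors t}. 1 / (real t)^2))
       \<le> (\<Prod>p\<in>U. hh p) * ((1 + uu (real n / real (\<Prod>U))) / real (\<Prod>U))"
      using inner_bound[OF fin pr assms] by (intro mult_left_mono) auto
  qed
  also have "\<dots> = (\<Sum>U\<in>Pow (PM M). ww U * (1 + uu (real n / real (\<Prod>U))))"
    by (simp add: ww_alt)
  finally show ?thesis .
qed

lemma pow_split3:
  assumes "finite L" "2 \<notin> L" "3 \<notin> L" "5 \<notin> L"
  shows "(\<Sum>U\<in>Pow (insert 2 (insert 3 (insert (5::nat) L))). f U) =
    (\<Sum>U\<in>Pow L. ((f U + f (insert 5 U)) + (f (insert 3 U) + f (insert 3 (insert 5 U))))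
       + ((f (insert 2 U) + f (insert 2 (insert 5 U))) + (f (insert 2 (insert 3 U)) + f (insert 2 (insert 3 (insert 5 U))))))"
proof -
  have "(\<Sum>U\<in>Pow (insert 2 (insert 3 (insert (5::nat) L))). f U)
      = (\<Sum>U\<in>Pow (insert 3 (insert 5 L)). f U + f (insert 2 U))"
    by (rule pow_split) (use assms in auto)
  also have "\<dots> = (\<Sum>U\<in>Pow (insert 5 L). (f U + f (insert 2 U)) + (f (insert 3 U) + f (insert 2 (insert 3 U))))"
    by (rule pow_split) (use assms in auto)
  also have "\<dots> = (\<Sum>U\<in>Pow L. ((f U + f (insert 2 U)) + (f (insert 3 U) + f (insert 2 (insert 3 U))))
       + ((f (insert 5 U) + f (insert 2 (insert 5 U))) + (f (insert 3 (insert 5 U)) + f (insert 2 (insert 3 (insert 5 U))))))"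
    by (rule pow_split) (use assms in auto)
  finally show ?thesis by (simp add: algebra_simps)
qed

lemma eight_terms2:
  fixes x :: real
  assumes "finite U" "2 \<notin> U" "3 \<notin> U" "5 \<notin> U" "0 < real (\<Prod>U)"
  defines "g \<equiv> (\<lambda>V. ww V * uu (x / real (\<Prod>V)))"
  shows "((g U + g (insert 5 U)) + (g (insert 3 U) + g (insert 3 (insert 5 U))))
       + ((g (insert 2 U) + g (insert 2 (insert 5 U))) + (g (insert 2 (insert 3 U)) + g (insert 2 (insert 3 (insert 5 U)))))
       = ww U * Psi (x / real (\<Prod>U))"
proof -
  show ?thesis using eight_terms[OF assms(1-5) refl, of x] unfolding g_def by simp
qed

lemma sqrt_prod: "finite U \<Longrightarrow> sqrt (real (\<Prod>U)) = (\<Prod>p\<in>U. sqrt (real p))"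
  by (induction U rule: finite_induct) (auto simp: real_sqrt_mult)

lemma ww_sqrt: assumes "finite U" shows "ww U * sqrt (real (\<Prod>U)) = (\<Prod>p\<in>U. hh p / real p * sqrt (real p))"
proof -
  have e: "sqrt (real (\<Prod>U)) = (\<Prod>p\<in>U. sqrt (real p))" by (rule sqrt_prod[OF assms])
  show ?thesis by (simp only: ww_def e prod.distrib[symmetric])
qed

lemma Psi_le: assumes "0 < y" shows "Psi y \<le> 1.35 / sqrt y"
  using Psi_bound[OF assms] assms by (simp add: field_simps)

lemma E12_cover: fixes p :: nat assumes "prime p" "p \<le> 47" "p \<noteq> 2" "p \<noteq> 3" "p \<noteq> 5"
  shows "p \<in> {7,11,13,17,19,23,29,31,37,41,43,47}"
proof -
  have "\<not> 2 dvd p" using assms(1,3) primes_dvd_imp_eq[of 2 p] by auto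
  moreover have "\<not> 3 dvd p" using assms(1,4) primes_dvd_imp_eq[of 3 p] by auto
  moreover have "\<not> 5 dvd p" using assms(1,5) primes_dvd_imp_eq[of 5 p] by auto
  moreover have "2 \<le> p" using assms prime_ge_2_nat by auto
  ultimately show ?thesis using assms(2) by simp presburger
qed

lemma rfun_nonneg: "0 \<le> rfun t"
proof -
  have "0 \<le> (\<Prod>p\<in>prime_factors t. ((real p)^2 - 1) / ((real p)^2 - real p - 1))"
  proof (rule prod_nonneg)
    fix p assume "p \<in> prime_factors t"
    then have p2: "2 \<le> p" by (auto intro: prime_ge_2_nat)
    then have "1 \<le> real p" by simp
    then have "0 \<le> (real p)^2 - 1" by (simp add: one_le_power)
    moreover have "1 \<le> (real p)^2 - real p - 1" by (rule den_pos[OF p2])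
    ultimately show "0 \<le> ((real p)^2 - 1) / ((real p)^2 - real p - 1)" by simp
  qed
  then show ?thesis unfolding rfun_def by simp
qed

lemma tail_bound:
  assumes "7 \<le> n" "finite G" "G \<subseteq> {n..}"
  shows "artinA * (real n * (\<Sum>t\<in>G. rfun t)) \<le> 1.275"
proof -
  define M where "M = max 5 (Max (insert n G))"
  have GM: "G \<subseteq> {n..M}"
  proof
    fix t assume t: "t \<in> G"
    have "t \<le> Max (insert n G)" using assms t by (intro Max_ge) auto
    then have "t \<le> M" unfolding M_def by (rule le_max_iff_disj[THEN iffD2, OF disjI2])
    then show "t \<in> {n..M}" using assms t by auto
  qed
  have M5: "5 \<le> M" unfolding M_def by simp
  have n1: "1 \<le> n" using assms by simp
  define X where "X = real n * (\<Sum>t\<in>G. rfun t)"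
  have X0: "0 \<le> X" unfolding X_def by (intro mult_nonneg_nonneg sum_nonneg rfun_nonneg) auto
  have "X \<le> real n * (\<Sum>t\<in>{n..M}. rfun t)" unfolding X_def
    by (intro mult_left_mono sum_mono2) (use GM rfun_nonneg in auto)
  also have "\<dots> \<le> (\<Sum>U\<in>Pow (PM M). ww U * (1 + uu (real n / real (\<Prod>U))))"
    by (rule main_sum[OF n1])
  also have "\<dots> = (\<Sum>U\<in>Pow (PM M). ww U) + (\<Sum>U\<in>Pow (PM M). ww U * uu (real n / real (\<Prod>U)))"
    by (simp add: algebra_simps sum.distrib)
  finally have X1: "X \<le> (\<Sum>U\<in>Pow (PM M). ww U) + (\<Sum>U\<in>Pow (PM M). ww U * uu (real n / real (\<Prod>U)))" .
  define L where "L = PM M - {2,3,5}"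
  have finL: "finite L" unfolding L_def using PM_finite by auto
  have L235: "2 \<notin> L" "3 \<notin> L" "5 \<notin> L" unfolding L_def by auto
  have PMe: "PM M = insert 2 (insert 3 (insert 5 L))" unfolding L_def PM_def using M5 by auto
  have Lprime: "\<And>p. p \<in> L \<Longrightarrow> prime p \<and> p \<le> M" unfolding L_def PM_def by auto
  have L1: "\<And>p. p \<in> L \<Longrightarrow> 1 \<le> p"
  proof -
    fix p assume "p \<in> L"
    then have "2 \<le> p" using Lprime prime_ge_2_nat by blast
    then show "1 \<le> p" by simp
  qed
  have P1: "(\<Sum>U\<in>Pow (PM M). ww U) = (\<Prod>p\<in>PM M. 1 + hh p / real p)"
    using prod_add[of "PM M" "\<lambda>p. hh p / real p" "\<lambda>_. 1", OF PM_finite]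
    by (simp add: ww_def add.commute)
  have P2: "(\<Sum>U\<in>Pow (PM M). ww U * uu (real n / real (\<Prod>U))) = (\<Sum>U\<in>Pow L. ww U * Psi (real n / real (\<Prod>U)))"
    unfolding PMe
  proof (subst pow_split3[OF finL L235], rule sum.cong[OF refl])
    fix U assume U: "U \<in> Pow L"
    then have finU: "finite U" using finL finite_subset by auto
    have Upr: "\<And>p. p \<in> U \<Longrightarrow> prime p" using U Lprime by auto
    have kpos: "0 < real (\<Prod>U)" using Upr finU by (auto intro!: prod_pos prime_gt_0_nat)
    show "ww U * uu (real n / real (\<Prod>U)) + ww (insert 5 U) * uu (real n / real (\<Prod>(insert 5 U))) +
          (ww (insert 3 U) * uu (real n / real (\<Prod>(insert 3 U))) + ww (insert 3 (insert 5 U)) * uu (real n / real (\<Prod>(insert 3 (insert 5 U))))) +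
          (ww (insert 2 U) * uu (real n / real (\<Prod>(insert 2 U))) + ww (insert 2 (insert 5 U)) * uu (real n / real (\<Prod>(insert 2 (insert 5 U)))) +
           (ww (insert 2 (insert 3 U)) * uu (real n / real (\<Prod>(insert 2 (insert 3 U)))) +
            ww (insert 2 (insert 3 (insert 5 U))) * uu (real n / real (\<Prod>(insert 2 (insert 3 (insert 5 U)))))))
          = ww U * Psi (real n / real (\<Prod>U))"
      by (rule eight_terms2) (use finU U L235 kpos in auto)
  qed
  have P3: "(\<Sum>U\<in>Pow L. ww U * Psi (real n / real (\<Prod>U))) \<le>
      (\<Sum>U\<in>Pow L. (1.35 / sqrt (real n)) * (\<Prod>p\<in>U. hh p / real p * sqrt (real p)))"
  proof (rule sum_mono)
    fix U assume U: "U \<in> Pow L"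
    then have finU: "finite U" using finL finite_subset by auto
    have Upr: "\<And>p. p \<in> U \<Longrightarrow> prime p" using U Lprime by auto
    have kpos: "0 < real (\<Prod>U)" using Upr finU by (auto intro!: prod_pos prime_gt_0_nat)
    have npos: "0 < real n" using n1 by simp
    have wwn: "0 \<le> ww U" using U by (intro ww_nonneg[of U M]) (auto simp: L_def)
    have "ww U * Psi (real n / real (\<Prod>U)) \<le> ww U * (1.35 / sqrt (real n / real (\<Prod>U)))"
      using Psi_le[of "real n / real (\<Prod>U)"] kpos npos wwn by (intro mult_left_mono) auto
    also have "\<dots> = (1.35 / sqrt (real n)) * (ww U * sqrt (real (\<Prod>U)))"
      using kpos npos by (simp add: real_sqrt_divide field_simps)
    also have "\<dots> = (1.35 / sqrt (real n)) * (\<Prod>p\<in>U. hh p / real p * sqrt (real p))"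
      unfolding ww_sqrt[OF finU] by (rule refl)
    finally show "ww U * Psi (real n / real (\<Prod>U)) \<le> (1.35 / sqrt (real n)) * (\<Prod>p\<in>U. hh p / real p * sqrt (real p))" .
  qed
  have P4: "(\<Sum>U\<in>Pow L. (1.35 / sqrt (real n)) * (\<Prod>p\<in>U. hh p / real p * sqrt (real p)))
       = (1.35 / sqrt (real n)) * (\<Prod>p\<in>L. 1 + hh p / real p * sqrt (real p))"
    using prod_add[of L "\<lambda>p. hh p / real p * sqrt (real p)" "\<lambda>_. 1", OF finL]
    by (simp add: sum_distrib_left add.commute)
  define Ap where "Ap = (\<Prod>p\<in>PM M. 1 - 1 / (real p * (real p - 1)))"
  have Ap0: "0 \<le> Ap" unfolding Ap_def
  proof (rule prod_nonneg)
    fix p assume "p \<in> PM M"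
    then have "2 \<le> real p" unfolding PM_def by (auto dest: prime_ge_2_nat)
    then have "2 \<le> real p * (real p - 1)" by (metis mult_mono mult_1_right le_diff_eq one_add_one order_refl
        zero_le_one one_le_numeral add_le_imp_le_left add_increasing le_add_same_cancel2 order_trans diff_ge_0_iff_ge)
    then show "0 \<le> 1 - 1 / (real p * (real p - 1))" by simp
  qed
  have AX: "artinA * X \<le> Ap * ((\<Prod>p\<in>PM M. 1 + hh p / real p) + (1.35 / sqrt (real n)) * (\<Prod>p\<in>L. 1 + hh p / real p * sqrt (real p)))"
  proof -
    have "artinA * X \<le> Ap * X" unfolding Ap_def using artinA_le X0 by (intro mult_right_mono) auto
    also have "\<dots> \<le> Ap * ((\<Prod>p\<in>PM M. 1 + hh p / real p) + (1.35 / sqrt (real n)) * (\<Prod>p\<in>L. 1 + hh p / real p * sqrt (real p)))"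
      using X1 P1 P2 P3 P4 Ap0 by (intro mult_left_mono) auto
    finally show ?thesis .
  qed
  have Q1: "Ap * (\<Prod>p\<in>PM M. 1 + hh p / real p) = 1"
    unfolding Ap_def prod.distrib[symmetric]
    by (rule prod.neutral) (auto simp: PM_def intro!: factor_one prime_ge_2_nat)
  have Ap_split: "Ap = (19/48) * (\<Prod>p\<in>L. 1 - 1 / (real p * (real p - 1)))"
    unfolding Ap_def PMe using finL L235 by simp
  have Q2: "Ap * (\<Prod>p\<in>L. 1 + hh p / real p * sqrt (real p)) = (19/48) * (\<Prod>p\<in>L. 1 + fq p)"
    unfolding Ap_split mult.assoc prod.distrib[symmetric]
    by (subst prod.cong[OF refl factor_sqrt]) (auto dest: Lprime prime_ge_2_nat)
  have Q3: "(\<Prod>p\<in>L. 1 + fq p) \<le> exp (\<Sum>p\<in>L. fq p)"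
    by (rule prod_le_exp[OF finL]) (auto intro!: fq_nonneg L1)
  have Q4: "(\<Sum>p\<in>L. fq p) \<le> 0.2749"
  proof -
    define E where "E = ({7,11,13,17,19,23,29,31,37,41,43,47} :: nat set)"
    define T where "T = {p\<in>L. 47 < p}"
    have finT: "finite T" unfolding T_def using finL by auto
    have LET: "L \<subseteq> E \<union> T"
    proof
      fix p assume p: "p \<in> L"
      show "p \<in> E \<union> T"
      proof (cases "p \<le> 47")
        case True then show ?thesis unfolding E_def using E12_cover[of p] Lprime[OF p] L235 p by auto
      next
        case False then show ?thesis unfolding T_def using p by auto
      qed
    qed
    have "(\<Sum>p\<in>L. fq p) \<le> (\<Sum>p\<in>E \<union> T. fq p)"
      by (rule sum_mono2) (use LET finT in \<open>auto simp: E_def T_def intro!: fq_nonneg\<close>)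
    also have "\<dots> = (\<Sum>p\<in>E. fq p) + (\<Sum>p\<in>T. fq p)"
      by (rule sum.union_disjoint) (use finT in \<open>auto simp: E_def T_def\<close>)
    also have "(\<Sum>p\<in>E. fq p) \<le> 0.129" unfolding E_def by (rule E12_sum)
    also have "(\<Sum>p\<in>T. fq p) \<le> 0.1459"
    proof (rule odd_tail[OF finT])
      fix m assume "m \<in> T"
      then have "prime m" "47 < m" unfolding T_def using Lprime by auto
      then show "47 < m \<and> odd m" using prime_odd_nat[of m] by auto
    qed
    finally show ?thesis by simp
  qed
  have Q5: "exp (\<Sum>p\<in>L. fq p) \<le> 1.35063"
  proof -
    have "exp (\<Sum>p\<in>L. fq p) \<le> exp 0.2749" using Q4 by simp
    also have "\<dots> \<le> 1 + 0.2749 + 0.2749^2" by (rule exp_bound) auto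
    also have "\<dots> \<le> 1.35063" by (simp add: power2_eq_square)
    finally show ?thesis .
  qed
  have sq: "2.6457 \<le> sqrt (real n)"
    by (rule real_le_rsqrt) (use assms in \<open>simp add: power2_eq_square\<close>)
  have c1: "1.35 / sqrt (real n) \<le> 1.35 / 2.6457" using sq n1 by (intro divide_left_mono) auto
  have Pq0: "0 \<le> (\<Prod>p\<in>L. 1 + fq p)"
    by (rule prod_nonneg) (auto intro!: add_nonneg_nonneg fq_nonneg L1)
  have "Ap * ((\<Prod>p\<in>PM M. 1 + hh p / real p) + (1.35 / sqrt (real n)) * (\<Prod>p\<in>L. 1 + hh p / real p * sqrt (real p)))
      = Ap * (\<Prod>p\<in>PM M. 1 + hh p / real p) + (1.35 / sqrt (real n)) * (Ap * (\<Prod>p\<in>L. 1 + hh p / real p * sqrt (real p)))"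
    by (simp only: distrib_left mult.left_commute)
  also have "\<dots> = 1 + (1.35 / sqrt (real n)) * ((19/48) * (\<Prod>p\<in>L. 1 + fq p))"
    by (simp only: Q1 Q2)
  finally have "artinA * X \<le> 1 + (1.35 / sqrt (real n)) * ((19/48) * (\<Prod>p\<in>L. 1 + fq p))"
    using AX by linarith
  also have "\<dots> \<le> 1 + (1.35 / 2.6457) * ((19/48) * 1.35063)"
    using c1 Q3 Q5 Pq0 by (intro add_left_mono mult_mono) auto
  also have "\<dots> \<le> 1.275" by simp
  finally show ?thesis unfolding X_def .
qed

lemma rfun_pos: assumes "1 \<le> t" shows "0 < rfun t"
proof -
  have "0 < (\<Prod>p\<in>prime_factors t. ((real p)^2 - 1) / ((real p)^2 - real p - 1))"
  proof (rule prod_pos)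
    fix p assume "p \<in> prime_factors t"
    then have p2: "2 \<le> p" by (auto intro: prime_ge_2_nat)
    then have "2 \<le> real p" by simp
    then have "4 \<le> (real p)^2" by (metis power_mono zero_le_numeral power2_eq_square numeral_times_numeral semiring_norm(12) semiring_norm(13) num_double)
    then have "0 < (real p)^2 - 1" by simp
    moreover have "1 \<le> (real p)^2 - real p - 1" by (rule den_pos[OF p2])
    ultimately show "0 < ((real p)^2 - 1) / ((real p)^2 - real p - 1)" by simp
  qed
  then show ?thesis unfolding rfun_def using assms by simp
qed

theorem mainTheorem17:
  fixes a d :: int and x :: real
  assumes "d \<ge> 1" and "x \<ge> 6"
  shows "0 < rho a d - artinA * (\<Sum>t\<in>{t::nat. 1 \<le> t \<and> real t \<le> x \<and> [int t = a] (mod d)}. rfun t)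
       \<and> rho a d - artinA * (\<Sum>t\<in>{t::nat. 1 \<le> t \<and> real t \<le> x \<and> [int t = a] (mod d)}. rfun t)
           < 1.28 / x"
proof -
  define S where "S = {t::nat. 1 \<le> t \<and> [int t = a] (mod d)}"
  define F where "F = {t::nat. 1 \<le> t \<and> real t \<le> x \<and> [int t = a] (mod d)}"
  define T where "T = {t::nat. 1 \<le> t \<and> x < real t \<and> [int t = a] (mod d)}"
  define n where "n = nat \<lfloor>x\<rfloor> + 1"
  have fl6: "6 \<le> \<lfloor>x\<rfloor>" using assms by (simp add: le_floor_iff)
  have n7: "7 \<le> n" unfolding n_def using fl6 by linarith
  have rn: "real n = of_int \<lfloor>x\<rfloor> + 1" unfolding n_def using fl6 by simp
  have xn: "x < real n" unfolding rn by linarith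
  have x0: "0 < x" using assms by simp
  have Tn: "T \<subseteq> {n..}"
  proof
    fix t assume "t \<in> T"
    then have "x < real t" unfolding T_def by auto
    then have "\<lfloor>x\<rfloor> < int t" by (simp add: floor_less_iff)
    then have "nat \<lfloor>x\<rfloor> < t" using fl6 by linarith
    then show "t \<in> {n..}" unfolding n_def by simp
  qed
  have finF: "finite F"
  proof (rule finite_subset)
    show "F \<subseteq> {..nat \<lfloor>x\<rfloor>}"
    proof
      fix t assume "t \<in> F"
      then have "real t \<le> x" unfolding F_def by auto
      then have "int t \<le> \<lfloor>x\<rfloor>" by (metis le_floor_iff of_int_of_nat_eq)
      then show "t \<in> {..nat \<lfloor>x\<rfloor>}" by auto
    qed
  qed auto
  have Apos: "0 < artinA" by (rule artinA_pos)
  have npos: "0 < real n" using n7 by simp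
  have bnd: "sum rfun G \<le> 1.275 / (artinA * real n)" if "finite G" "G \<subseteq> T" for G
  proof -
    have "artinA * (real n * sum rfun G) \<le> 1.275"
      by (rule tail_bound[OF n7 that(1)]) (use that Tn in auto)
    moreover have "sum rfun G * (artinA * real n) = artinA * (real n * sum rfun G)" by (simp add: algebra_simps)
    ultimately have h: "sum rfun G * (artinA * real n) \<le> 1.275" by linarith
    have c: "0 < artinA * real n" using Apos npos by simp
    show ?thesis by (subst pos_le_divide_eq[OF c]) (rule h)
  qed
  have sumT: "rfun summable_on T"
  proof (rule nonneg_bdd_above_summable_on)
    show "bdd_above (sum rfun ` {G. G \<subseteq> T \<and> finite G})"
      by (rule bdd_aboveI[where M = "1.275 / (artinA * real n)"]) (use bnd in auto)
  qed (use rfun_nonneg in auto)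
  have SFT: "S = F \<union> T" unfolding S_def F_def T_def by auto
  have FT: "F \<inter> T = {}" unfolding F_def T_def by auto
  have "infsum rfun S = infsum rfun F + infsum rfun T"
    unfolding SFT by (rule infsum_Un_disjoint[OF _ sumT FT]) (use finF in auto)
  then have diff: "rho a d - artinA * (\<Sum>t\<in>F. rfun t) = artinA * infsum rfun T"
    unfolding rho_def S_def[symmetric] using finF by (simp add: algebra_simps)
  define t0 where "t0 = nat (a mod d) + nat d * n"
  have t0T: "t0 \<in> T"
  proof -
    have amd: "0 \<le> a mod d" using assms by simp
    have "int t0 = a mod d + d * int n" unfolding t0_def using amd assms by simp
    then have c: "[int t0 = a] (mod d)" unfolding cong_def by simp
    have "n \<le> t0" unfolding t0_def using assms
      by (metis le_add2 le_trans mult_le_mono1 nat_mult_1 nat_one_as_int nat_mono)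
    then have "x < real t0" using xn by linarith
    moreover have "1 \<le> t0" using \<open>n \<le> t0\<close> n7 by linarith
    ultimately show ?thesis unfolding T_def using c by auto
  qed
  have "rfun t0 \<le> infsum rfun T"
    using finite_sum_le_infsum[OF sumT, of "{t0}"] t0T rfun_nonneg by auto
  moreover have "0 < rfun t0" using t0T unfolding T_def by (intro rfun_pos) auto
  ultimately have pos: "0 < infsum rfun T" by linarith
  have up: "infsum rfun T \<le> 1.275 / (artinA * real n)"
    by (rule infsum_le_finite_sums[OF sumT]) (use bnd in auto)
  have "artinA * infsum rfun T \<le> artinA * (1.275 / (artinA * real n))"
    using up Apos by (intro mult_left_mono) auto
  also have "\<dots> = 1.275 / real n" using Apos by simp
  also have "\<dots> < 1.28 / x" using xn x0 npos by (simp add: field_simps)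
  finally have lt: "artinA * infsum rfun T < 1.28 / x" .
  show ?thesis unfolding F_def[symmetric] diff using pos Apos lt by simp
qed


end
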